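(* For every $m\ge 0$, $$(1-x)a_{m+1}(x)=-2(1+x)(mx-2m+x-1)a_m(x)-2x(1+x)^2a_m'(x)+x(4mx-x-3)b_m(x)-4x^2(1+x)b_m'(x),$$ $$(x-1)b_{m+1}(x)=(4mx+x-1)a_m(x)-4x(1+x)a_m'(x)+(6mx-4m+x-3)(x+1)b_m(x)-2x(1+x)^2b_m'(x).$$
   Context: $P_m(x)=\sum_{i=0}^m d_i(m)x^i$ with $d_i(m)=2^{-2m}\sum_{k=i}^m 2^k\binom{2m-2k}{m-k}\binom{m+k}{k}\binom{k}{i}$; $Q_m(x)=2^m m!\,x^mP_m(1/x)$ (degree $m$). $(a_m(x),b_m(x))$ is the symmetric decomposition of $Q_m$: $a_m(x)=\frac{Q_m(x)-x^{m+1}Q_m(1/x)}{1-x}$, $b_m(x)=\frac{x^mQ_m(1/x)-Q_m(x)}{1-x}$, so $Q_m(x)=a_m(x)+xb_m(x)$. *)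

theory Defs
  imports "HOL-Computational_Algebra.Polynomial"
begin

definition dcoef :: "nat \<Rightarrow> nat \<Rightarrow> real" where
  "dcoef i m = (\<Sum>k=i..m. 2^k * real ((2*m - 2*k) choose (m - k))
                 * real ((m + k) choose k) * real (k choose i)) / 4^m"

definition Ppoly :: "nat \<Rightarrow> real poly" where
  "Ppoly m = (\<Sum>i\<le>m. monom (dcoef i m) i)"

text \<open>Q_m(x) = 2^m m! x^m P_m(1/x) = sum_i 2^m m! d_i(m) x^(m-i)\<close>
definition Qpoly :: "nat \<Rightarrow> real poly" where
  "Qpoly m = smult (2^m * fact m) (\<Sum>i\<le>m. monom (dcoef i m) (m - i))"

text \<open>x^m Q_m(1/x) = 2^m m! P_m(x)\<close>
definition Qrev :: "nat \<Rightarrow> real poly" where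
  "Qrev m = smult (2^m * fact m) (Ppoly m)"

text \<open>a_m = (Q_m(x) - x^(m+1) Q_m(1/x)) / (1-x)\<close>
definition apoly :: "nat \<Rightarrow> real poly" where
  "apoly m = (Qpoly m - pCons 0 (Qrev m)) div [:1, -1:]"

definition bpoly :: "nat \<Rightarrow> real poly" where
  "bpoly m = (Qrev m - Qpoly m) div [:1, -1:]"

end

theory Submission
  imports Defs
begin

definition G :: "nat \<Rightarrow> nat \<Rightarrow> real" where
  "G m k = 2^m * fact m * (2^k * real ((2*m - 2*k) choose (m - k)) * real ((m + k) choose k) / 4^m)"

lemma Gfact: assumes "k \<le> m"
  shows "G m k = 2^k * fact (2*(m-k)) * fact (m+k) / ((fact (m-k))^2 * fact k * 2^m)"
proof -
  have e1: "real ((2*m - 2*k) choose (m - k)) = fact (2*(m-k)) / (fact (m-k) * fact (m-k))"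
  proof -
    have "2*m - 2*k = 2*(m-k)" "2*(m-k) - (m-k) = m-k" by auto
    then show ?thesis using binomial_fact[of "m-k" "2*(m-k)", where 'a=real] by simp
  qed
  have e2: "real ((m + k) choose k) = fact (m+k) / (fact k * fact m)"
    using binomial_fact[of k "m+k", where 'a=real] by simp
  have e3: "(4::real)^m = 2^m * 2^m" by (simp add: power_mult_distrib[symmetric])
  show ?thesis unfolding G_def e1 e2 e3 by (simp add: field_simps power2_eq_square)
qed

lemma Grec1: assumes "k \<le> m"
  shows "G (Suc m) k = (2*real m + 1 - 2*real k) * G m k + (if k = 0 then 0 else 2*(real m + real k) * G m (k-1))"
proof -
  obtain j where m: "m = j + k" using assms le_iff_add by (metis add.commute)
  have s1: "Suc m - k = Suc j" "2*(Suc m - k) = Suc (Suc (2*j))" "Suc m + k = Suc (j+2*k)"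
    "m - k = j" "2*(m-k) = 2*j" "m + k = j + 2*k" "2 * Suc j = Suc (Suc (2*j))" using m by auto
  have a: "G (Suc m) k = 2^k * fact (Suc (Suc (2*j))) * fact (Suc (j+2*k)) / ((fact (Suc j))^2 * fact k * 2^(Suc m))"
    using assms by (simp only: Gfact s1 le_SucI)
  have b: "G m k = 2^k * fact (2*j) * fact (j+2*k) / ((fact j)^2 * fact k * 2^m)"
    using assms by (simp only: Gfact s1)
  have F1: "fact (Suc (Suc (2*j))) = (2*real j+2)*(2*real j+1)*(fact (2*j)::real)"
    by (simp add: algebra_simps)
  have F2: "fact (Suc (j+2*k)) = (real j + 2*real k + 1) * (fact (j+2*k)::real)"
    by (simp add: algebra_simps)
  have F3: "fact (Suc j) = (real j + 1) * (fact j :: real)" by (simp add: algebra_simps)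
  have nz: "1 + real j \<noteq> 0" "real j + 1 \<noteq> 0" "(fact j::real) \<noteq> 0" "(fact k::real) \<noteq> 0" by auto
  show ?thesis
  proof (cases k)
    case 0
    show ?thesis unfolding a b F1 F2 F3 using 0 nz by (simp add: divide_simps power2_eq_square m)
  next
    case (Suc k')
    have s2: "m - k' = Suc j" "2*(m-k') = Suc (Suc (2*j))" "m + k' = Suc (j + 2*k')" "2 * Suc j = Suc (Suc (2*j))"
      using m Suc by auto
    have c: "G m (k-1) = 2^k' * fact (Suc (Suc (2*j))) * fact (Suc (j+2*k')) / ((fact (Suc j))^2 * fact k' * 2^m)"
      using assms Suc by (simp only: Gfact s2 Suc_leD diff_Suc_1)
    have F4: "fact (j+2*k) = (real j + 2*real k) * (fact (Suc (j+2*k'))::real)"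
    proof -
      have "j+2*k = Suc (Suc (j+2*k'))" using Suc by simp
      then show ?thesis by (simp del: fact_Suc add: fact_Suc[of "Suc (j+2*k')"] Suc)
    qed
    have F5: "fact k = real k * (fact k' :: real)" using Suc by simp
    have nz2: "(fact k'::real) \<noteq> 0" "real k \<noteq> 0" using Suc by auto
    show ?thesis unfolding a b c F1 F2 F3 F4 F5 using Suc nz nz2 by (simp add: divide_simps power2_eq_square m) (simp add: algebra_simps)
  qed
qed

lemma Grec2: "G (Suc m) (Suc m) = 2*(2*real m+1) * G m m"
proof -
  have a: "G (Suc m) (Suc m) = 2^(Suc m) * fact (Suc (Suc (2*m))) / (fact (Suc m) * 2^(Suc m))"
  proof -
    have "2 * (Suc m - Suc m) = 0" "Suc m - Suc m = 0" "Suc m + Suc m = Suc (Suc (2*m))" by auto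
    then show ?thesis using Gfact[of "Suc m" "Suc m"] by (simp only: order_refl fact_0 power_0 mult_1_right mult_1 power2_eq_square)
  qed
  have b: "G m m = 2^m * fact (2*m) / (fact m * 2^m)"
  proof -
    have "2 * (m - m) = 0" "m - m = 0" "m + m = 2*m" by auto
    then show ?thesis using Gfact[of m m] by (simp only: order_refl fact_0 power_0 mult_1_right mult_1 power2_eq_square)
  qed
  have F1: "fact (Suc (Suc (2*m))) = (2*real m+2)*(2*real m+1)*(fact (2*m)::real)"
    by (simp add: algebra_simps)
  have F3: "fact (Suc m) = (real m + 1) * (fact m :: real)" by (simp add: algebra_simps)
  have nz: "1 + real m \<noteq> 0" "real m + 1 \<noteq> 0" "(fact m::real) \<noteq> 0" by auto
  show ?thesis unfolding a b F1 F3 using nz by (simp add: divide_simps) (simp add: algebra_simps)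
qed

lemma key: "(\<Sum>k\<le>Suc m. G (Suc m) k * u^(Suc m - k) * v^k) =
   (\<Sum>k\<le>m. (2*real m+1-2*real k)*G m k * u^(Suc m - k) * v^k)
 + (\<Sum>k\<le>m. 2*(real m + 1 + real k) * G m k * u^(m-k) * v^(Suc k))"
proof -
  define A where "A k = (if k \<le> m then (2*real m+1-2*real k)*G m k * u^(Suc m - k) * v^k else 0)" for k
  define B where "B k = (if k = 0 then 0 else 2*(real m + real k) * G m (k-1) * u^(Suc m - k) * v^k)" for k
  have t: "G (Suc m) k * u^(Suc m - k) * v^k = A k + B k" if "k \<le> Suc m" for k
  proof (cases "k \<le> m")
    case True
    then show ?thesis unfolding A_def B_def by (simp add: Grec1 algebra_simps)
  next
    case False
    then have "k = Suc m" using that by simp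
    then show ?thesis unfolding A_def B_def by (simp add: Grec2 algebra_simps)
  qed
  have "(\<Sum>k\<le>Suc m. G (Suc m) k * u^(Suc m - k) * v^k) = (\<Sum>k\<le>Suc m. A k) + (\<Sum>k\<le>Suc m. B k)"
    by (simp add: t sum.distrib[symmetric] del: sum.atMost_Suc)
  also have "(\<Sum>k\<le>Suc m. A k) = (\<Sum>k\<le>m. (2*real m+1-2*real k)*G m k * u^(Suc m - k) * v^k)"
    by (simp add: A_def)
  also have "(\<Sum>k\<le>Suc m. B k) = (\<Sum>k\<le>m. 2*(real m + 1 + real k) * G m k * u^(m-k) * v^(Suc k))"
    by (subst sum.atMost_Suc_shift) (simp add: B_def algebra_simps)
  finally show ?thesis .
qed

lemma swap: "(\<Sum>i\<le>(m::nat). \<Sum>k=i..m. f i k) = (\<Sum>k\<le>m. \<Sum>i\<le>k. f i k)"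
proof (induction m)
  case 0 then show ?case by simp
next
  case (Suc m)
  have "(\<Sum>i\<le>Suc m. \<Sum>k=i..Suc m. f i k) = (\<Sum>i\<le>m. \<Sum>k=i..Suc m. f i k) + f (Suc m) (Suc m)"
    by simp
  also have "(\<Sum>i\<le>m. \<Sum>k=i..Suc m. f i k) = (\<Sum>i\<le>m. (\<Sum>k=i..m. f i k) + f i (Suc m))"
    by (rule sum.cong) (auto simp: sum.cl_ivl_Suc)
  finally show ?case using Suc by (simp add: sum.distrib)
qed

definition tt :: "nat \<Rightarrow> nat \<Rightarrow> real" where
  "tt m k = 2^k * real ((2*m - 2*k) choose (m - k)) * real ((m + k) choose k)"

lemma G_tt: "G m k = 2^m * fact m * tt m k / 4^m" unfolding G_def tt_def by simp

lemma Qrev_eval: "poly (Qrev m) x = (\<Sum>k\<le>m. G m k * (1+x)^k)"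
proof -
  have "poly (Ppoly m) x = (\<Sum>i\<le>m. dcoef i m * x^i)"
    by (simp add: Ppoly_def poly_sum poly_monom)
  also have "\<dots> = (\<Sum>i\<le>m. \<Sum>k=i..m. tt m k * real (k choose i) * x^i) / 4^m"
    by (simp add: dcoef_def tt_def sum_divide_distrib sum_distrib_right)
  also have "\<dots> = (\<Sum>k\<le>m. \<Sum>i\<le>k. tt m k * real (k choose i) * x^i) / 4^m"
    by (simp add: swap)
  also have "\<dots> = (\<Sum>k\<le>m. tt m k * (x+1)^k) / 4^m"
    by (simp add: binomial_ring[of x 1] sum_distrib_left mult.assoc)
  finally show ?thesis
    by (simp add: Qrev_def G_tt sum_distrib_left sum_divide_distrib algebra_simps)
qed

lemma Qpoly_eval: "poly (Qpoly m) x = (\<Sum>k\<le>m. G m k * x^(m-k) * (1+x)^k)"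
proof -
  have "poly (\<Sum>i\<le>m. monom (dcoef i m) (m - i)) x = (\<Sum>i\<le>m. dcoef i m * x^(m-i))"
    by (simp add: poly_sum poly_monom)
  also have "\<dots> = (\<Sum>i\<le>m. \<Sum>k=i..m. tt m k * real (k choose i) * x^(m-i)) / 4^m"
    by (simp add: dcoef_def tt_def sum_divide_distrib sum_distrib_right)
  also have "\<dots> = (\<Sum>k\<le>m. \<Sum>i\<le>k. tt m k * real (k choose i) * x^(m-i)) / 4^m"
    by (simp add: swap)
  also have "\<dots> = (\<Sum>k\<le>m. tt m k * x^(m-k) * (1+x)^k) / 4^m"
  proof -
    have "(\<Sum>i\<le>k. tt m k * real (k choose i) * x^(m-i)) = tt m k * x^(m-k) * (1+x)^k" if "k \<le> m" for k
    proof -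
      have "(1+x)^k = (\<Sum>i\<le>k. real (k choose i) * x^(k-i))" by (simp add: binomial_ring[of 1 x])
      moreover have "x^(m-k) * x^(k-i) = x^(m-i)" if "i \<le> k" for i
        using that \<open>k \<le> m\<close> by (simp add: power_add[symmetric])
      ultimately show ?thesis
        by (simp add: sum_distrib_left algebra_simps)
    qed
    then show ?thesis by simp
  qed
  finally show ?thesis
    by (simp add: Qpoly_def G_tt sum_distrib_left sum_divide_distrib algebra_simps)
qed

lemma alg:
  fixes x M A B A' B' A1 B1 Q R Q' R' Q1 R1 :: real
  assumes x1: "x \<noteq> 1"
   and e1: "(1-x)*A = Q - x*R" and e2: "(1-x)*B = R - Q"
   and e3: "(1-x)*A' - A = Q' - (R + x*R')" and e4: "(1-x)*B' - B = R' - Q'"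
   and e5: "(1-x)*A1 = Q1 - x*R1" and e6: "(1-x)*B1 = R1 - Q1"
   and e7: "Q1 = ((6*M+3)*x + 4*M+2)*Q - 2*x*(1+x)*Q'"
   and e8: "R1 = (4*M+3+2*(M+1)*x)*R + 2*x*(1+x)*R'"
  shows "(1 - x) * A1 =
           - 2 * (1 + x) * (M * x - 2 * M + x - 1) * A
           - 2 * x * (1 + x)^2 * A'
           + x * (4 * M * x - x - 3) * B
           - 4 * x^2 * (1 + x) * B'
       \<and> (x - 1) * B1 =
           (4 * M * x + x - 1) * A
           - 4 * x * (1 + x) * A'
           + (6 * M * x - 4 * M + x - 3) * (x + 1) * B
           - 2 * x * (1 + x)^2 * B'"
proof -
  have nz: "(1-x)^2 \<noteq> 0" using x1 by simp
  have s1: "(1-x)^2*A = (1-x)*(Q-x*R)" using e1 by (simp add: power2_eq_square)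
  have s2: "(1-x)^2*A' = (Q-x*R) + (1-x)*(Q'-R-x*R')"
  proof -
    have "(1-x)^2*A' = (1-x)*((1-x)*A')" by (simp add: power2_eq_square)
    also have "(1-x)*A' = A + (Q' - (R + x*R'))" using e3 by simp
    finally show ?thesis using e1 by (simp add: algebra_simps)
  qed
  have s3: "(1-x)^2*B = (1-x)*(R-Q)" using e2 by (simp add: power2_eq_square)
  have s4: "(1-x)^2*B' = (R-Q) + (1-x)*(R'-Q')"
  proof -
    have "(1-x)^2*B' = (1-x)*((1-x)*B')" by (simp add: power2_eq_square)
    also have "(1-x)*B' = B + (R' - Q')" using e4 by simp
    finally show ?thesis using e2 by (simp add: algebra_simps)
  qed
  have g1: "(1-x)^2 * ((1 - x) * A1) = (1-x)^2 * (
           - 2 * (1 + x) * (M * x - 2 * M + x - 1) * A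
           - 2 * x * (1 + x)^2 * A'
           + x * (4 * M * x - x - 3) * B
           - 4 * x^2 * (1 + x) * B')"
  proof -
    have "(1-x)^2 * (
           - 2 * (1 + x) * (M * x - 2 * M + x - 1) * A
           - 2 * x * (1 + x)^2 * A'
           + x * (4 * M * x - x - 3) * B
           - 4 * x^2 * (1 + x) * B') =
        (- 2 * (1 + x) * (M * x - 2 * M + x - 1)) * ((1-x)^2*A)
           - (2 * x * (1 + x)^2) * ((1-x)^2*A')
           + (x * (4 * M * x - x - 3)) * ((1-x)^2*B)
           - (4 * x^2 * (1 + x)) * ((1-x)^2*B')" by algebra
    also have "\<dots> = (1-x)^2 * (Q1 - x*R1)" unfolding s1 s2 s3 s4 e7 e8 by algebra
    also have "\<dots> = (1-x)^2 * ((1 - x) * A1)" using e5 by simp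
    finally show ?thesis by (rule sym)
  qed
  have g2: "(1-x)^2 * ((x - 1) * B1) = (1-x)^2 * (
           (4 * M * x + x - 1) * A
           - 4 * x * (1 + x) * A'
           + (6 * M * x - 4 * M + x - 3) * (x + 1) * B
           - 2 * x * (1 + x)^2 * B')"
  proof -
    have "(1-x)^2 * (
           (4 * M * x + x - 1) * A
           - 4 * x * (1 + x) * A'
           + (6 * M * x - 4 * M + x - 3) * (x + 1) * B
           - 2 * x * (1 + x)^2 * B') =
           (4 * M * x + x - 1) * ((1-x)^2*A)
           - (4 * x * (1 + x)) * ((1-x)^2*A')
           + ((6 * M * x - 4 * M + x - 3) * (x + 1)) * ((1-x)^2*B)
           - (2 * x * (1 + x)^2) * ((1-x)^2*B')" by algebra
    also have "\<dots> = (1-x)^2 * (Q1 - R1)" unfolding s1 s2 s3 s4 e7 e8 by algebra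
    also have "\<dots> = (1-x)^2 * (-((1 - x) * B1))" using e6 by simp
    also have "\<dots> = (1-x)^2 * ((x - 1) * B1)" by algebra
    finally show ?thesis by (rule sym)
  qed
  show ?thesis using g1 g2 nz by simp
qed

lemma pderiv_sum': "pderiv (sum f A) = (\<Sum>x\<in>A. pderiv (f x))"
  using higher_pderiv_sum[of 1 f A] by simp

lemma Qrev_poly: "Qrev m = (\<Sum>k\<le>m. smult (G m k) ([:1,1:]^k))"
  by (rule poly_ext) (simp add: Qrev_eval poly_sum algebra_simps)

lemma Qpoly_poly: "Qpoly m = (\<Sum>k\<le>m. smult (G m k) ([:0,1:]^(m-k) * [:1,1:]^k))"
  by (rule poly_ext) (simp add: Qpoly_eval poly_sum algebra_simps)

lemma dRev: "poly (pderiv (Qrev m)) x = (\<Sum>k\<le>m. G m k * (real k * (1+x)^(k-1)))"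
  by (simp add: Qrev_poly pderiv_sum' pderiv_smult pderiv_power poly_sum pderiv_pCons algebra_simps)

lemma dQ: "poly (pderiv (Qpoly m)) x =
   (\<Sum>k\<le>m. G m k * (real (m-k) * x^(m-k-1) * (1+x)^k + real k * x^(m-k) * (1+x)^(k-1)))"
  by (simp add: Qpoly_poly pderiv_sum' pderiv_smult pderiv_mult pderiv_power poly_sum pderiv_pCons algebra_simps)

lemma Rrec: "poly (Qrev (Suc m)) x = (4*real m+3+2*(real m+1)*x) * poly (Qrev m) x
   + 2*x*(1+x) * poly (pderiv (Qrev m)) x"
proof -
  have "poly (Qrev (Suc m)) x = (\<Sum>k\<le>Suc m. G (Suc m) k * 1^(Suc m - k) * (1+x)^k)"
    by (simp add: Qrev_eval)
  also have "\<dots> = (\<Sum>k\<le>m. (2*real m+1-2*real k)*G m k * 1^(Suc m - k) * (1+x)^k)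
 + (\<Sum>k\<le>m. 2*(real m + 1 + real k) * G m k * 1^(m-k) * (1+x)^(Suc k))" by (rule key)
  also have "\<dots> = (\<Sum>k\<le>m. (4*real m+3+2*(real m+1)*x) * (G m k * (1+x)^k)
      + 2*x*(1+x) * (G m k * (real k * (1+x)^(k-1))))"
  proof -
    have "(2*real m+1-2*real k)*G m k * 1^(Suc m - k) * (1+x)^k + 2*(real m + 1 + real k) * G m k * 1^(m-k) * (1+x)^(Suc k)
      = (4*real m+3+2*(real m+1)*x) * (G m k * (1+x)^k)
      + 2*x*(1+x) * (G m k * (real k * (1+x)^(k-1)))" for k
    proof -
      have e: "(1+x) * (real k * (1+x)^(k-1)) = real k * (1+x)^k"
        by (cases k) auto
      have "2*x*(1+x) * (G m k * (real k * (1+x)^(k-1))) = 2*x*G m k*((1+x) * (real k * (1+x)^(k-1)))"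
        by (simp add: algebra_simps)
      also have "\<dots> = 2*x*G m k*(real k * (1+x)^k)" by (simp only: e)
      finally show ?thesis by (simp add: algebra_simps)
    qed
    then show ?thesis by (simp add: sum.distrib[symmetric])
  qed
  also have "\<dots> = (4*real m+3+2*(real m+1)*x) * poly (Qrev m) x
   + 2*x*(1+x) * poly (pderiv (Qrev m)) x"
    by (simp add: Qrev_eval dRev sum_distrib_left sum.distrib)
  finally show ?thesis .
qed

lemma tw:
  fixes x p q p1 q1 pS qS g M K :: real
  assumes "(M-K)*p1*x = (M-K)*p" "K*q1*(1+x) = K*q" "pS = x*p" "qS = (1+x)*q"
  shows "(2*M+1-2*K)*g*pS*q + 2*(M+1+K)*g*p*qS
     = ((6*M+3)*x+4*M+2)*(g*p*q) - 2*x*(1+x)*(g*((M-K)*p1*q + K*p*q1))"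
proof -
  have "x*(1+x)*(g*((M-K)*p1*q + K*p*q1)) = g*(1+x)*q*((M-K)*p1*x) + g*x*p*(K*q1*(1+x))"
    by algebra
  also have "\<dots> = g*(1+x)*q*((M-K)*p) + g*x*p*(K*q)" by (simp only: assms)
  finally have h: "x*(1+x)*(g*((M-K)*p1*q + K*p*q1)) = g*(1+x)*q*((M-K)*p) + g*x*p*(K*q)" .
  have "2*x*(1+x)*(g*((M-K)*p1*q + K*p*q1)) = 2*(x*(1+x)*(g*((M-K)*p1*q + K*p*q1)))" by algebra
  then show ?thesis unfolding h assms(3,4) by algebra
qed

lemma Qrec: "poly (Qpoly (Suc m)) x = ((6*real m+3)*x+4*real m+2) * poly (Qpoly m) x
   - 2*x*(1+x) * poly (pderiv (Qpoly m)) x"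
proof -
  have "poly (Qpoly (Suc m)) x = (\<Sum>k\<le>Suc m. G (Suc m) k * x^(Suc m - k) * (1+x)^k)"
    by (simp add: Qpoly_eval)
  also have "\<dots> = (\<Sum>k\<le>m. (2*real m+1-2*real k)*G m k * x^(Suc m - k) * (1+x)^k)
 + (\<Sum>k\<le>m. 2*(real m + 1 + real k) * G m k * x^(m-k) * (1+x)^(Suc k))" by (rule key)
  also have "\<dots> = (\<Sum>k\<le>m. ((6*real m+3)*x+4*real m+2) * (G m k * x^(m-k) * (1+x)^k)
      - 2*x*(1+x) * (G m k * (real (m-k) * x^(m-k-1) * (1+x)^k + real k * x^(m-k) * (1+x)^(k-1))))"
  proof -
    have "(2*real m+1-2*real k)*G m k * x^(Suc m - k) * (1+x)^k + 2*(real m + 1 + real k) * G m k * x^(m-k) * (1+x)^(Suc k)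
      = ((6*real m+3)*x+4*real m+2) * (G m k * x^(m-k) * (1+x)^k)
      - 2*x*(1+x) * (G m k * (real (m-k) * x^(m-k-1) * (1+x)^k + real k * x^(m-k) * (1+x)^(k-1)))"
      if "k \<in> {..m}" for k
    proof -
      have km: "k \<le> m" using that by simp
      have rd: "real (m-k) = real m - real k" using km by simp
      have a1: "(real m - real k) * x^(m-k-1) * x = (real m - real k) * x^(m-k)"
        using km by (cases "m - k") (auto simp: rd[symmetric])
      have a2: "real k * (1+x)^(k-1) * (1+x) = real k * (1+x)^k"
        by (cases k) auto
      have a3: "x^(Suc m - k) = x * x^(m-k)" using km by (simp add: Suc_diff_le)
      have a4: "(1+x)^(Suc k) = (1+x) * (1+x)^k" by simp
      have "(2*real m+1-2*real k)*G m k * x^(Suc m - k) * (1+x)^k + 2*(real m + 1 + real k) * G m k * x^(m-k) * (1+x)^(Suc k)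
        = ((6*real m+3)*x+4*real m+2) * (G m k * x^(m-k) * (1+x)^k)
         - 2*x*(1+x) * (G m k * ((real m - real k) * x^(m-k-1) * (1+x)^k + real k * x^(m-k) * (1+x)^(k-1)))"
        using tw[OF a1 a2 a3 a4, of "G m k"] by (simp add: algebra_simps)
      then show ?thesis by (simp only: rd)
    qed
    then show ?thesis by (simp add: sum.distrib[symmetric])
  qed
  also have "\<dots> = ((6*real m+3)*x+4*real m+2) * poly (Qpoly m) x
   - 2*x*(1+x) * poly (pderiv (Qpoly m)) x"
    by (simp add: Qpoly_eval dQ sum_distrib_left sum_subtractf)
  finally show ?thesis .
qed

lemma dvd_lin: assumes "poly p 1 = 0" shows "[:1,-1:] * (p div [:1,-1:]) = (p::real poly)"
proof -
  obtain r where r: "p = [:-1,1:] * r" using assms poly_eq_0_iff_dvd[of p 1] by auto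
  have h: "p = [:1,-1:] * (-r)" using r by simp
  have "p div [:1,-1:] = -r" by (subst h, rule nonzero_mult_div_cancel_left) simp
  then show ?thesis using h by simp
qed

lemma QR1: "poly (Qpoly m) 1 = poly (Qrev m) 1"
  by (simp add: Qpoly_eval Qrev_eval)

lemma a_eq: "[:1,-1:] * apoly m = Qpoly m - pCons 0 (Qrev m)"
  unfolding apoly_def by (rule dvd_lin) (simp add: QR1)

lemma b_eq: "[:1,-1:] * bpoly m = Qrev m - Qpoly m"
  unfolding bpoly_def by (rule dvd_lin) (simp add: QR1)

lemma lin_ev: "poly ([:1,-1:] * (q::real poly)) x = (1-x) * poly q x"
  by simp algebra

lemma lin_d: "poly (pderiv ([:1,-1:] * (q::real poly))) x = (1-x)*poly (pderiv q) x - poly q x"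
  by (simp only: pderiv_mult) (simp add: pderiv_pCons, algebra)

lemma a_ev: "(1-x) * poly (apoly m) x = poly (Qpoly m) x - x * poly (Qrev m) x"
proof -
  have "(1-x) * poly (apoly m) x = poly ([:1,-1:] * apoly m) x" by (simp only: lin_ev)
  also have "\<dots> = poly (Qpoly m) x - x * poly (Qrev m) x" by (simp only: a_eq) simp
  finally show ?thesis .
qed

lemma b_ev: "(1-x) * poly (bpoly m) x = poly (Qrev m) x - poly (Qpoly m) x"
proof -
  have "(1-x) * poly (bpoly m) x = poly ([:1,-1:] * bpoly m) x" by (simp only: lin_ev)
  also have "\<dots> = poly (Qrev m) x - poly (Qpoly m) x" by (simp only: b_eq) simp
  finally show ?thesis .
qed

lemma a_dev: "(1-x) * poly (pderiv (apoly m)) x - poly (apoly m) x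
   = poly (pderiv (Qpoly m)) x - (poly (Qrev m) x + x * poly (pderiv (Qrev m)) x)"
proof -
  have "(1-x) * poly (pderiv (apoly m)) x - poly (apoly m) x = poly (pderiv ([:1,-1:] * apoly m)) x"
    by (simp only: lin_d)
  also have "\<dots> = poly (pderiv (Qpoly m) - (Qrev m + pCons 0 (pderiv (Qrev m)))) x"
    by (simp only: a_eq pderiv_diff pderiv_pCons)
  finally show ?thesis by simp
qed

lemma b_dev: "(1-x) * poly (pderiv (bpoly m)) x - poly (bpoly m) x
   = poly (pderiv (Qrev m)) x - poly (pderiv (Qpoly m)) x"
proof -
  have "(1-x) * poly (pderiv (bpoly m)) x - poly (bpoly m) x = poly (pderiv ([:1,-1:] * bpoly m)) x"
    by (simp only: lin_d)
  also have "\<dots> = poly (pderiv (Qrev m) - pderiv (Qpoly m)) x"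
    by (simp only: b_eq pderiv_diff)
  finally show ?thesis by simp
qed

lemma ext_all:
  fixes f g :: "real \<Rightarrow> real"
  assumes "isCont f 1" "isCont g 1" "\<And>x. x \<noteq> 1 \<Longrightarrow> f x = g x"
  shows "f y = g y"
proof (cases "y = 1")
  case False then show ?thesis using assms(3) by simp
next
  case True
  have "f \<midarrow>1\<rightarrow> f 1" by (rule isContD[OF assms(1)])
  then have "g \<midarrow>1\<rightarrow> f 1" using LIM_equal[of 1 f g] assms(3) by auto
  then have "f 1 = g 1" using isContD[OF assms(2)] by (rule LIM_unique)
  then show ?thesis using True by simp
qed

theorem lemma3p1:
  fixes m :: nat and x :: real
  shows "(1 - x) * poly (apoly (Suc m)) x =
           - 2 * (1 + x) * (real m * x - 2 * real m + x - 1) * poly (apoly m) x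
           - 2 * x * (1 + x)^2 * poly (pderiv (apoly m)) x
           + x * (4 * real m * x - x - 3) * poly (bpoly m) x
           - 4 * x^2 * (1 + x) * poly (pderiv (bpoly m)) x
       \<and> (x - 1) * poly (bpoly (Suc m)) x =
           (4 * real m * x + x - 1) * poly (apoly m) x
           - 4 * x * (1 + x) * poly (pderiv (apoly m)) x
           + (6 * real m * x - 4 * real m + x - 3) * (x + 1) * poly (bpoly m) x
           - 2 * x * (1 + x)^2 * poly (pderiv (bpoly m)) x"
proof -
  have main: "(1 - x) * poly (apoly (Suc m)) x = - 2 * (1 + x) * (real m * x - 2 * real m + x - 1) * poly (apoly m) x
           - 2 * x * (1 + x)^2 * poly (pderiv (apoly m)) x
           + x * (4 * real m * x - x - 3) * poly (bpoly m) x
           - 4 * x^2 * (1 + x) * poly (pderiv (bpoly m)) x \<and> (x - 1) * poly (bpoly (Suc m)) x = (4 * real m * x + x - 1) * poly (apoly m) x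
           - 4 * x * (1 + x) * poly (pderiv (apoly m)) x
           + (6 * real m * x - 4 * real m + x - 3) * (x + 1) * poly (bpoly m) x
           - 2 * x * (1 + x)^2 * poly (pderiv (bpoly m)) x" if "x \<noteq> 1" for x
    using alg[OF that a_ev b_ev a_dev b_dev a_ev[of x "Suc m"] b_ev[of x "Suc m"] Qrec Rrec] .
  have h1: "(\<lambda>x. (1 - x) * poly (apoly (Suc m)) x) x = (\<lambda>x. - 2 * (1 + x) * (real m * x - 2 * real m + x - 1) * poly (apoly m) x
           - 2 * x * (1 + x)^2 * poly (pderiv (apoly m)) x
           + x * (4 * real m * x - x - 3) * poly (bpoly m) x
           - 4 * x^2 * (1 + x) * poly (pderiv (bpoly m)) x) x"
    by (rule ext_all) (use main in \<open>auto intro!: continuous_intros\<close>)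
  have h2: "(\<lambda>x. (x - 1) * poly (bpoly (Suc m)) x) x = (\<lambda>x. (4 * real m * x + x - 1) * poly (apoly m) x
           - 4 * x * (1 + x) * poly (pderiv (apoly m)) x
           + (6 * real m * x - 4 * real m + x - 3) * (x + 1) * poly (bpoly m) x
           - 2 * x * (1 + x)^2 * poly (pderiv (bpoly m)) x) x"
    by (rule ext_all) (use main in \<open>auto intro!: continuous_intros\<close>)
  show ?thesis using h1 h2 by simp
qed

end
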